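(* Let $q\ge1$ and $t$ be integers with $0\le t<q$, and let $\mathcal{C}_{q,t}^{\mathrm{base}}=\bigcup_{i=0}^{\lfloor (q-t-1)/(t+1)\rfloor}\mathcal{S}_{q-t-i(t+1)}^q.$ Then: (a) for every $1\le j\le t!$, the code $\big(\mathcal{S}_{\mathrm{ins}}^t(\mathcal{C}_{q,t}^{\mathrm{base}})\big)_j$ is a $t$-tail-deletion-correcting code and $\big|\big(\mathcal{S}_{\mathrm{ins}}^t(\mathcal{C}_{q,t}^{\mathrm{base}})\big)_j\big|=|\mathcal{C}_{q,t}^{\mathrm{base}}|=q!\sum_{i=0}^{\lfloor (q-t-1)/(t+1)\rfloor}\frac{1}{(t+i(t+1))!};$ (b) for every $1\le j_1<j_2\le t!$, the codes $\big(\mathcal{S}_{\mathrm{ins}}^t(\mathcal{C}_{q,t}^{\mathrm{base}})\big)_{j_1}$ and $\big(\mathcal{S}_{\mathrm{ins}}^t(\mathcal{C}_{q,t}^{\mathrm{base}})\big)_{j_2}$ are disjoint; (c) if $q\not\equiv 0 \pmod{t+1}$, then $\big(\mathcal{S}_{\mathrm{ins}}^t(\mathcal{C}_{q,t}^{\mathrm{base}})\big)_1\cup\mathcal{S}_1^q$ is a $t$-tail-deletion-correcting code.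
   Context: Let $[q]=\{0,1,\dots,q-1\}$. For $1\le m\le q$, a partial permutation of length $m$ over $[q]$ is a sequence $\pi=(\pi_1,\dots,\pi_m)$ of $m$ pairwise distinct elements of $[q]$; $|\pi|=m$. Let $\mathcal{S}_m^q$ be the set of those of length $m$ and $\mathcal{S}_{\mathrm{all}}^q=\bigcup_{m=1}^{q}\mathcal{S}_m^q$. A code is any subset of $\mathcal{S}_{\mathrm{all}}^q$. Juxtaposition $\omega\pi$ denotes concatenation with $\omega$ on the left. For $\pi$ of length $m$ and integer $j\ge 0$, $\pi_{\downarrow j}=(\pi_{k+1},\dots,\pi_m)$ with $k=\min(j,m-1)$ (leftmost symbols are deleted; the last symbol is never deleted); $\mathcal{B}_{\mathrm{del}}^t(\pi)=\{\pi_{\downarrow j}:0\le j\le t\}$. A code $\mathcal{C}$ is $t$-tail-deletion-correcting if $\mathcal{B}_{\mathrm{del}}^t(\pi_1)\cap\mathcal{B}_{\mathrm{del}}^t(\pi_2)=\emptyset$ for all distinct $\pi_1,\pi_2\in\mathcal{C}$. For $\pi\in\mathcal{S}_{\mathrm{all}}^q$, $\mathcal{S}_{\mathrm{ins}}^t(\pi)$ is the set of all $\omega\pi\in\mathcal{S}_{\mathrm{all}}^q$ with $\omega$ a sequence of exactly $t$ elements of $[q]$ (entries of $\omega\pi$ pairwise distinct); if $|\pi|\le q-t$ it has $\binom{q-|\pi|}{t}t!$ elements. Its elements are listed in increasing lexicographic order and $(\mathcal{S}_{\mathrm{ins}}^t(\pi))_j$ denotes the $j$-th one. For a code $\mathcal{C}$,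 $(\mathcal{S}_{\mathrm{ins}}^t(\mathcal{C}))_j=\{(\mathcal{S}_{\mathrm{ins}}^t(\pi))_j:\pi\in\mathcal{C}\}$. *)

theory Defs
  imports Complex_Main "HOL-Library.List_Lexorder"
begin

(* Partial permutations over [q] = {0..<q} are represented as lists of naturals.
   List_Lexorder provides the lexicographic order on lists (for lists of equal
   length it is the usual lexicographic order). *)

definition pperm :: "nat \<Rightarrow> nat \<Rightarrow> nat list set" where
  "pperm m q = {xs. length xs = m \<and> distinct xs \<and> set xs \<subseteq> {..<q}}"

definition pperm_all :: "nat \<Rightarrow> nat list set" where
  "pperm_all q = (\<Union>m\<in>{1..q}. pperm m q)"

definition tail_del :: "nat \<Rightarrow> nat list \<Rightarrow> nat list" where
  "tail_del j xs = drop (min j (length xs - 1)) xs"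

definition del_ball :: "nat \<Rightarrow> nat list \<Rightarrow> nat list set" where
  "del_ball t xs = {tail_del j xs | j. j \<le> t}"

definition tail_del_correcting :: "nat \<Rightarrow> nat list set \<Rightarrow> bool" where
  "tail_del_correcting t C \<longleftrightarrow>
     (\<forall>p1\<in>C. \<forall>p2\<in>C. p1 \<noteq> p2 \<longrightarrow> del_ball t p1 \<inter> del_ball t p2 = {})"

definition ins_set :: "nat \<Rightarrow> nat \<Rightarrow> nat list \<Rightarrow> nat list set" where
  "ins_set q t xs = {w @ xs | w. length w = t \<and> w @ xs \<in> pperm_all q}"

(* j-th element (1-based) in increasing lexicographic order *)
definition ins_nth :: "nat \<Rightarrow> nat \<Rightarrow> nat list \<Rightarrow> nat \<Rightarrow> nat list" where
  "ins_nth q t xs j = sorted_list_of_set (ins_set q t xs) ! (j - 1)"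

definition ins_code :: "nat \<Rightarrow> nat \<Rightarrow> nat list set \<Rightarrow> nat \<Rightarrow> nat list set" where
  "ins_code q t C j = (\<lambda>xs. ins_nth q t xs j) ` C"

definition Cbase :: "nat \<Rightarrow> nat \<Rightarrow> nat list set" where
  "Cbase q t = (\<Union>i\<in>{0..(q - t - 1) div (t + 1)}. pperm (q - t - i * (t + 1)) q)"

end

theory Submission
  imports Defs
begin

lemma finite_pperm: "finite (pperm m q)"
proof -
  have "pperm m q \<subseteq> {xs. set xs \<subseteq> {..<q} \<and> length xs = m}" by (auto simp: pperm_def)
  thus ?thesis using finite_lists_length_eq[of "{..<q}" m] finite_subset by blast
qed

lemma finite_pperm_all: "finite (pperm_all q)"
  unfolding pperm_all_def using finite_pperm by auto

lemma card_pperm: assumes "m \<le> q" shows "real (card (pperm m q)) = fact q / fact (q - m)"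
proof -
  have "card (pperm m q) = \<Prod>{q - m + 1 .. q}"
    using card_lists_distinct_length_eq[of "{..<q}" m] assms by (simp add: pperm_def)
  moreover have "(fact q :: nat) = fact (q - m) * \<Prod>{Suc (q - m)..q}"
    by (rule fact_eq_fact_times) simp
  hence "(fact q :: real) = fact (q - m) * real (\<Prod>{Suc (q - m)..q})"
    by (metis of_nat_fact of_nat_mult)
  ultimately show ?thesis by simp
qed

lemma finite_ins_set: "finite (ins_set q t xs)"
  by (rule finite_subset[OF _ finite_pperm_all[of q]]) (auto simp: ins_set_def)

lemma ins_set_card:
  assumes "xs \<in> pperm L q" "L \<ge> 1" "L + t \<le> q"
  shows "fact t \<le> card (ins_set q t xs)"
proof -
  let ?A = "{..<q} - set xs"
  have cA: "card ?A = q - L" using assms(1)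
    by (simp add: pperm_def card_Diff_subset distinct_card)
  obtain B where B: "B \<subseteq> ?A" "card B = t" "finite B"
  proof -
    have "t \<le> card ?A" using cA assms by simp
    thus ?thesis using obtain_subset_with_card_n that by blast
  qed
  have "card {w. length w = t \<and> distinct w \<and> set w \<subseteq> B} = \<Prod>{1..t}"
    using card_lists_distinct_length_eq[of B t] B by simp
  hence c1: "card {w. length w = t \<and> distinct w \<and> set w \<subseteq> B} = fact t"
    by (simp add: fact_prod)
  have sub: "(\<lambda>w. w @ xs) ` {w. length w = t \<and> distinct w \<and> set w \<subseteq> B} \<subseteq> ins_set q t xs"
  proof
    fix y assume "y \<in> (\<lambda>w. w @ xs) ` {w. length w = t \<and> distinct w \<and> set w \<subseteq> B}"
    then obtain w where w: "y = w @ xs" "length w = t" "distinct w" "set w \<subseteq> B" by auto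
    have d: "distinct (w @ xs)" using w B(1) assms(1) by (auto simp: pperm_def)
    have s: "set (w @ xs) \<subseteq> {..<q}" using w B(1) assms(1) by (auto simp: pperm_def)
    have "length (w @ xs) \<in> {1..q}" using w assms by (auto simp: pperm_def)
    hence "w @ xs \<in> pperm_all q" using d s unfolding pperm_all_def pperm_def by blast
    thus "y \<in> ins_set q t xs" using w unfolding ins_set_def by blast
  qed
  have "inj_on (\<lambda>w. w @ xs) {w. length w = t \<and> distinct w \<and> set w \<subseteq> B}"
    by (auto simp: inj_on_def)
  hence "card ((\<lambda>w. w @ xs) ` {w. length w = t \<and> distinct w \<and> set w \<subseteq> B}) = fact t"
    using c1 card_image by metis
  thus ?thesis using card_mono[OF finite_ins_set sub] by simp
qed

lemma ins_nth_in:
  assumes "1 \<le> j" "j \<le> card (ins_set q t xs)"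
  shows "ins_nth q t xs j \<in> ins_set q t xs"
  using assms finite_ins_set[of q t xs] unfolding ins_nth_def
  by (metis diff_less le_less_trans less_numeral_extra(1) nth_mem sorted_list_of_set.length_sorted_key_list_of_set sorted_list_of_set.set_sorted_key_list_of_set linorder_not_le not_one_le_zero le_trans)

lemma ins_nth_inj:
  assumes "1 \<le> j1" "j1 \<le> card (ins_set q t xs)" "1 \<le> j2" "j2 \<le> card (ins_set q t xs)" "j1 \<noteq> j2"
  shows "ins_nth q t xs j1 \<noteq> ins_nth q t xs j2"
proof -
  have "distinct (sorted_list_of_set (ins_set q t xs))" by simp
  moreover have "length (sorted_list_of_set (ins_set q t xs)) = card (ins_set q t xs)" by simp
  ultimately show ?thesis using assms unfolding ins_nth_def
    by (simp add: nth_eq_iff_index_eq)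
qed

lemma ins_set_elem: "y \<in> ins_set q t xs \<Longrightarrow> drop t y = xs \<and> length y = length xs + t"
  by (auto simp: ins_set_def)


lemma ari_bound: "i \<le> (q - t - 1) div (t + 1) \<Longrightarrow> t < q \<Longrightarrow> i * (t + 1) + t + 1 \<le> (q::nat)"
proof -
  assume a: "i \<le> (q - t - 1) div (t + 1)" "t < q"
  have "i * (t + 1) \<le> ((q - t - 1) div (t + 1)) * (t + 1)" using a mult_le_mono1 by blast
  also have "\<dots> \<le> q - t - 1" using div_mult_mod_eq[of "q - t - 1" "t + 1"] by linarith
  finally show ?thesis using a by linarith
qed

lemma ari_bound2:
  assumes "i \<le> (q - t - 1) div (t + 1)" "t < q" "\<not> (t + 1) dvd q"
  shows "i * (t + 1) + t + 2 \<le> (q::nat)"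
proof -
  let ?D = "(q - t - 1) div (t + 1)" and ?r = "(q - t - 1) mod (t + 1)"
  have e: "?D * (t + 1) + ?r = q - t - 1" by (rule div_mult_mod_eq)
  have "?r \<noteq> 0"
  proof
    assume "?r = 0"
    hence "q = (?D + 1) * (t + 1)" using e assms(2) by (simp add: algebra_simps)
    thus False using assms(3) by (metis dvd_triv_right)
  qed
  have "i * (t + 1) \<le> ?D * (t + 1)" using assms mult_le_mono1 by blast
  thus ?thesis using e \<open>?r \<noteq> 0\<close> assms(2) by linarith
qed

lemma ari_eq:
  fixes i1 i2 a b t q :: nat
  assumes "i1*(t+1) + t+1 \<le> q" "i2*(t+1) + t+1 \<le> q" "a \<le> t" "b \<le> t"
    "q - i1*(t+1) - a = q - i2*(t+1) - b"
  shows "i1 = i2 \<and> a = b"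
proof -
  have "i1 = i2"
  proof (rule ccontr)
    assume "i1 \<noteq> i2"
    hence "i1 < i2 \<or> i2 < i1" by arith
    thus False
    proof
      assume "i1 < i2"
      hence "(i1 + 1) * (t + 1) \<le> i2 * (t + 1)" by (intro mult_le_mono1) simp
      hence "i1 * (t + 1) + (t + 1) \<le> i2 * (t + 1)" by (simp add: algebra_simps)
      thus False using assms by linarith
    next
      assume "i2 < i1"
      hence "(i2 + 1) * (t + 1) \<le> i1 * (t + 1)" by (intro mult_le_mono1) simp
      hence "i2 * (t + 1) + (t + 1) \<le> i1 * (t + 1)" by (simp add: algebra_simps)
      thus False using assms by linarith
    qed
  qed
  thus ?thesis using assms by simp
qed

lemma Cbase_mem:
  assumes "xs \<in> Cbase q t" "t < q"
  obtains i where "i \<le> (q - t - 1) div (t + 1)" "i * (t + 1) + t + 1 \<le> q"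
    "xs \<in> pperm (q - t - i * (t + 1)) q" "length xs = q - t - i * (t + 1)"
    "fact t \<le> card (ins_set q t xs)"
proof -
  from assms obtain i where i: "i \<le> (q - t - 1) div (t + 1)" "xs \<in> pperm (q - t - i * (t + 1)) q"
    unfolding Cbase_def by auto
  have b: "i * (t + 1) + t + 1 \<le> q" using ari_bound i assms by blast
  have "fact t \<le> card (ins_set q t xs)"
    by (rule ins_set_card[OF i(2)]) (use b in auto)
  thus ?thesis using that i b by (auto simp: pperm_def)
qed

lemma code_elem:
  assumes "xs \<in> Cbase q t" "t < q" "1 \<le> j" "j \<le> fact t"
  obtains i where "i * (t + 1) + t + 1 \<le> q" "i \<le> (q - t - 1) div (t + 1)"
    "drop t (ins_nth q t xs j) = xs" "length (ins_nth q t xs j) = q - i * (t + 1)"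
proof -
  obtain i where i: "i \<le> (q - t - 1) div (t + 1)" "i * (t + 1) + t + 1 \<le> q"
    "length xs = q - t - i * (t + 1)" "fact t \<le> card (ins_set q t xs)"
    using Cbase_mem[OF assms(1,2)] by metis
  have "ins_nth q t xs j \<in> ins_set q t xs" using ins_nth_in assms i by (meson le_trans)
  from ins_set_elem[OF this] i that show ?thesis by auto
qed

lemma del_ball_long: "t + 1 \<le> length p \<Longrightarrow> del_ball t p = {drop k p | k. k \<le> t}"
  unfolding del_ball_def tail_del_def by (auto simp: min_def)

lemma code_correcting:
  assumes "t < q" "1 \<le> j" "j \<le> fact t"
  shows "tail_del_correcting t (ins_code q t (Cbase q t) j)"
  unfolding tail_del_correcting_def
proof (intro ballI impI)
  fix p1 p2 assume p1: "p1 \<in> ins_code q t (Cbase q t) j" and p2: "p2 \<in> ins_code q t (Cbase q t) j"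
    and ne: "p1 \<noteq> p2"
  from p1 obtain x1 where x1: "x1 \<in> Cbase q t" "p1 = ins_nth q t x1 j" by (auto simp: ins_code_def)
  from p2 obtain x2 where x2: "x2 \<in> Cbase q t" "p2 = ins_nth q t x2 j" by (auto simp: ins_code_def)
  obtain i1 where i1: "i1 * (t + 1) + t + 1 \<le> q" "drop t p1 = x1" "length p1 = q - i1 * (t + 1)"
    using code_elem[OF x1(1) assms] x1(2) by metis
  obtain i2 where i2: "i2 * (t + 1) + t + 1 \<le> q" "drop t p2 = x2" "length p2 = q - i2 * (t + 1)"
    using code_elem[OF x2(1) assms] x2(2) by metis
  show "del_ball t p1 \<inter> del_ball t p2 = {}"
  proof (rule ccontr)
    assume "del_ball t p1 \<inter> del_ball t p2 \<noteq> {}"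
    then obtain a b where ab: "a \<le> t" "b \<le> t" "drop a p1 = drop b p2"
      using del_ball_long[of t p1] del_ball_long[of t p2] i1 i2 by auto
    have "length (drop a p1) = length (drop b p2)" using ab by simp
    hence "q - i1 * (t + 1) - a = q - i2 * (t + 1) - b" using i1 i2 by simp
    hence "a = b" using ari_eq[OF i1(1) i2(1) ab(1,2)] by simp
    hence "drop (t - a) (drop a p1) = drop (t - a) (drop a p2)" using ab by simp
    hence "x1 = x2" using i1(2) i2(2) ab(1) by simp
    thus False using ne x1 x2 by simp
  qed
qed

lemma code_card:
  assumes "t < q" "1 \<le> j" "j \<le> fact t"
  shows "card (ins_code q t (Cbase q t) j) = card (Cbase q t)"
  unfolding ins_code_def
proof (rule card_image, rule inj_onI)
  fix x y assume "x \<in> Cbase q t" "y \<in> Cbase q t" "ins_nth q t x j = ins_nth q t y j"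
  thus "x = y" using code_elem[OF _ assms] by metis
qed

lemma Cbase_card:
  assumes "t < q"
  shows "real (card (Cbase q t)) = fact q * (\<Sum>i=0..(q - t - 1) div (t + 1). 1 / fact (t + i * (t + 1)))"
proof -
  let ?D = "(q - t - 1) div (t + 1)"
  have "card (Cbase q t) = (\<Sum>i=0..?D. card (pperm (q - t - i * (t + 1)) q))"
    unfolding Cbase_def
  proof (rule card_UN_disjoint)
    show "finite {0..?D}" by simp
    show "\<forall>i\<in>{0..?D}. finite (pperm (q - t - i * (t + 1)) q)" using finite_pperm by blast
    show "\<forall>i\<in>{0..?D}. \<forall>j\<in>{0..?D}. i \<noteq> j \<longrightarrow>
        pperm (q - t - i * (t + 1)) q \<inter> pperm (q - t - j * (t + 1)) q = {}"
    proof (intro ballI impI)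
      fix i j assume i: "i \<in> {0..?D}" and j: "j \<in> {0..?D}" and "i \<noteq> j"
      have bi: "i * (t + 1) + t + 1 \<le> q" using ari_bound i assms by simp
      have bj: "j * (t + 1) + t + 1 \<le> q" using ari_bound j assms by simp
      have "q - t - i * (t + 1) \<noteq> q - t - j * (t + 1)"
      proof
        assume "q - t - i * (t + 1) = q - t - j * (t + 1)"
        hence "i * (t + 1) = j * (t + 1)" using bi bj by linarith
        thus False using \<open>i \<noteq> j\<close> mult_right_cancel[of "t + 1" i j] by simp
      qed
      thus "pperm (q - t - i * (t + 1)) q \<inter> pperm (q - t - j * (t + 1)) q = {}"
        by (auto simp: pperm_def)
    qed
  qed
  hence "real (card (Cbase q t)) = (\<Sum>i=0..?D. real (card (pperm (q - t - i * (t + 1)) q)))"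
    by simp
  also have "\<dots> = (\<Sum>i=0..?D. fact q * (1 / fact (t + i * (t + 1))))"
  proof (rule sum.cong[OF refl])
    fix i assume i: "i \<in> {0..?D}"
    have bi: "i * (t + 1) + t + 1 \<le> q" using ari_bound i assms by simp
    have "q - (q - t - i * (t + 1)) = t + i * (t + 1)" using bi by simp
    thus "real (card (pperm (q - t - i * (t + 1)) q)) = fact q * (1 / fact (t + i * (t + 1)))"
      using card_pperm[of "q - t - i * (t + 1)" q] by simp
  qed
  also have "\<dots> = fact q * (\<Sum>i=0..?D. 1 / fact (t + i * (t + 1)))"
    by (simp add: sum_distrib_left)
  finally show ?thesis .
qed

theorem mainTheorem9:
  fixes q t :: nat
  assumes "1 \<le> q" and "t < q"
  shows "(\<forall>j. 1 \<le> j \<and> j \<le> fact t \<longrightarrow>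
            tail_del_correcting t (ins_code q t (Cbase q t) j) \<and>
            card (ins_code q t (Cbase q t) j) = card (Cbase q t) \<and>
            real (card (Cbase q t)) =
              fact q * (\<Sum>i=0..(q - t - 1) div (t + 1). 1 / fact (t + i * (t + 1))))
       \<and> (\<forall>j1 j2. 1 \<le> j1 \<and> j1 < j2 \<and> j2 \<le> fact t \<longrightarrow>
            ins_code q t (Cbase q t) j1 \<inter> ins_code q t (Cbase q t) j2 = {})
       \<and> (\<not> (t + 1) dvd q \<longrightarrow>
            tail_del_correcting t (ins_code q t (Cbase q t) 1 \<union> pperm 1 q))"
proof (intro conjI allI impI)
  fix j :: nat assume j: "1 \<le> j \<and> j \<le> fact t"
  show "tail_del_correcting t (ins_code q t (Cbase q t) j)"
    using code_correcting assms j by blast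
  show "card (ins_code q t (Cbase q t) j) = card (Cbase q t)"
    using code_card assms j by blast
  show "real (card (Cbase q t)) =
              fact q * (\<Sum>i=0..(q - t - 1) div (t + 1). 1 / fact (t + i * (t + 1)))"
    using Cbase_card assms by blast
next
  fix j1 j2 :: nat assume j: "1 \<le> j1 \<and> j1 < j2 \<and> j2 \<le> fact t"
  show "ins_code q t (Cbase q t) j1 \<inter> ins_code q t (Cbase q t) j2 = {}"
  proof (rule ccontr)
    assume "ins_code q t (Cbase q t) j1 \<inter> ins_code q t (Cbase q t) j2 \<noteq> {}"
    then obtain x y where xy: "x \<in> Cbase q t" "y \<in> Cbase q t" "ins_nth q t x j1 = ins_nth q t y j2"
      by (auto simp: ins_code_def)
    have "x = y" using code_elem[OF xy(1) assms(2), of j1] code_elem[OF xy(2) assms(2), of j2] j xy(3)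
      by (metis less_imp_le order.trans)
    obtain i where "fact t \<le> card (ins_set q t x)" using Cbase_mem[OF xy(1) assms(2)] by metis
    hence "ins_nth q t x j1 \<noteq> ins_nth q t x j2" using ins_nth_inj[of j1 q t x j2] j by simp
    thus False using xy(3) \<open>x = y\<close> by simp
  qed
next
  assume nd: "\<not> (t + 1) dvd q"
  have one: "1 \<le> (1::nat)" "1 \<le> (fact t :: nat)" by auto
  show "tail_del_correcting t (ins_code q t (Cbase q t) 1 \<union> pperm 1 q)"
    unfolding tail_del_correcting_def
  proof (intro ballI impI)
    fix p1 p2 assume p1: "p1 \<in> ins_code q t (Cbase q t) 1 \<union> pperm 1 q"
      and p2: "p2 \<in> ins_code q t (Cbase q t) 1 \<union> pperm 1 q" and ne: "p1 \<noteq> p2"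
    have long: "\<forall>y\<in>del_ball t p. 2 \<le> length y" if p: "p \<in> ins_code q t (Cbase q t) 1" for p
    proof -
      from p obtain x where x: "x \<in> Cbase q t" "p = ins_nth q t x 1" by (auto simp: ins_code_def)
      obtain i where i: "i \<le> (q - t - 1) div (t + 1)" "length p = q - i * (t + 1)"
        using code_elem[OF x(1) assms(2) one] x(2) by metis
      have "i * (t + 1) + t + 2 \<le> q" using ari_bound2[OF i(1) assms(2) nd] .
      hence "t + 2 \<le> length p" using i by simp
      thus ?thesis using del_ball_long[of t p] by auto
    qed
    have sing: "del_ball t p = {p}" if p: "p \<in> pperm 1 q" for p
    proof -
      from p obtain s where "p = [s]" by (auto simp: pperm_def length_Suc_conv)
      thus ?thesis unfolding del_ball_def tail_del_def by auto
    qed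
    have sl: "length p = 1" if "p \<in> pperm 1 q" for p using that by (simp add: pperm_def)
    show "del_ball t p1 \<inter> del_ball t p2 = {}"
    proof (cases "p1 \<in> ins_code q t (Cbase q t) 1")
      case c1: True
      show ?thesis
      proof (cases "p2 \<in> ins_code q t (Cbase q t) 1")
        case True
        thus ?thesis using c1 ne code_correcting[OF assms(2) one] unfolding tail_del_correcting_def by blast
      next
        case False
        hence "p2 \<in> pperm 1 q" using p2 by blast
        thus ?thesis using long[OF c1] sing sl by fastforce
      qed
    next
      case c1: False
      hence q1: "p1 \<in> pperm 1 q" using p1 by blast
      show ?thesis
      proof (cases "p2 \<in> ins_code q t (Cbase q t) 1")
        case True
        thus ?thesis using long[OF True] sing[OF q1] sl[OF q1] by fastforce
      next
        case False
        hence "p2 \<in> pperm 1 q" using p2 by blast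
        thus ?thesis using sing q1 ne by auto
      qed
    qed
  qed
qed

end
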